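(* For a finite additive poset $A$ the following are equivalent: (i) $A$ is plain; (ii) the set of all order-preserving linear functionals on $A$ is separating; (iii) there exists a separating subset of $A^*$; (iv) there is a set $S\subset A^*$ with $\bigcap_{s\in S}\operatorname{Ker}s=0$ such that for all $a,b\in A$, $a\le b$ holds if and only if $s(a)\le_t s(b)$ for all $s\in S$.
   Context: An additive poset is a pair $(A,\le)$ where $A$ is an abelian group and $\le$ is a partial order on $A$ such that for all $a,b,c\in A$: $(\ast)$ if $b\le a$ and $c\le a$ then $b+c\le a$; $(\ast\ast)$ if $a\le b$ and $a\le c$ then $a\le a+b+c$. $A$ is a $\mathbb{Z}/2\mathbb{Z}$-vector space and $A^*=\operatorname{Hom}(A,\mathbb{Z}/2\mathbb{Z})$. The trivial order $\le_t$ on $\mathbb{Z}/2\mathbb{Z}$ is $0\le_t0$, $0\le_t1$, $1\le_t1$. A functional $f\in A^*$ is order-preserving if $a\le b$ implies $f(a)\le_t f(b)$. A set $S\subset A^*$ is separating if all its elements are order-preserving and for any $a,b\in A$ with $a\not\le b$ there is $s\in S$ with $s(a)=1$, $s(b)=0$. For a set $I$, $2^I$ denotes the subsets of $I$ with symmetric difference and inclusion. An embedding of additive posets $A\to B$ is an injective group homomorphism $\varphi$ with $a\le b\iff\varphi(a)\le\varphi(b)$. $A$ is plain if it embeds in $2^I$ for some finite set $I$. *)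

theory Defs
  imports Main "HOL-Library.Z2"
begin

definition additive_poset :: "('a::ab_group_add \<Rightarrow> 'a \<Rightarrow> bool) \<Rightarrow> bool" where
  "additive_poset le \<longleftrightarrow>
     reflp le \<and> antisymp le \<and> transp le \<and>
     (\<forall>a b c. le b a \<and> le c a \<longrightarrow> le (b + c) a) \<and>
     (\<forall>a b c. le a b \<and> le a c \<longrightarrow> le a (a + b + c))"

text \<open>Elements of A* = Hom(A, Z/2Z): group homomorphisms into the field bit.\<close>
definition dual_elem :: "('a::ab_group_add \<Rightarrow> bit) \<Rightarrow> bool" where
  "dual_elem f \<longleftrightarrow> (\<forall>a b. f (a + b) = f a + f b)"

definition le_t :: "bit \<Rightarrow> bit \<Rightarrow> bool" where
  "le_t x y \<longleftrightarrow> x = 0 \<or> y = 1"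

definition order_preserving :: "('a \<Rightarrow> 'a \<Rightarrow> bool) \<Rightarrow> ('a \<Rightarrow> bit) \<Rightarrow> bool" where
  "order_preserving le f \<longleftrightarrow> (\<forall>a b. le a b \<longrightarrow> le_t (f a) (f b))"

definition separating :: "('a::ab_group_add \<Rightarrow> 'a \<Rightarrow> bool) \<Rightarrow> ('a \<Rightarrow> bit) set \<Rightarrow> bool" where
  "separating le S \<longleftrightarrow>
     (\<forall>s\<in>S. dual_elem s \<and> order_preserving le s) \<and>
     (\<forall>a b. \<not> le a b \<longrightarrow> (\<exists>s\<in>S. s a = 1 \<and> s b = 0))"

definition embeds_in_powerset :: "('a::ab_group_add \<Rightarrow> 'a \<Rightarrow> bool) \<Rightarrow> 'i set \<Rightarrow> ('a \<Rightarrow> 'i set) \<Rightarrow> bool" where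
  "embeds_in_powerset le I \<phi> \<longleftrightarrow>
     (\<forall>a. \<phi> a \<subseteq> I) \<and>
     (\<forall>a b. \<phi> (a + b) = (\<phi> a - \<phi> b) \<union> (\<phi> b - \<phi> a)) \<and>
     inj \<phi> \<and>
     (\<forall>a b. le a b \<longleftrightarrow> \<phi> a \<subseteq> \<phi> b)"

text \<open>Plain: embeds in 2^I for some finite set I (WLOG I a set of naturals).\<close>
definition plain :: "('a::ab_group_add \<Rightarrow> 'a \<Rightarrow> bool) \<Rightarrow> bool" where
  "plain le \<longleftrightarrow> (\<exists>(I::nat set) \<phi>. finite I \<and> embeds_in_powerset le I \<phi>)"

end

theory Submission
  imports Defs
begin

lemma bit_cases2: "(x::bit) = 0 \<or> x = 1" by (cases x) auto

instance bit :: finite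
proof
  have "(UNIV::bit set) \<subseteq> {0,1}" using bit_cases2 by auto
  then show "finite (UNIV::bit set)" using finite_subset by blast
qed

lemma dual_zero: "dual_elem s \<Longrightarrow> s 0 = 0"
proof -
  assume "dual_elem s"
  then have "s (0+0) = s 0 + s 0" unfolding dual_elem_def by blast
  then show ?thesis using bit_cases2[of "s 0"] by auto
qed

lemma not_le_t: "\<not> le_t x y \<longleftrightarrow> x = 1 \<and> y = 0"
  unfolding le_t_def using bit_cases2[of x] bit_cases2[of y] by auto

lemma sep_mono:
  assumes "separating le S" "S \<subseteq> {f. dual_elem f}"
  shows "separating le {f. dual_elem f \<and> order_preserving le f}"
  unfolding separating_def
proof (intro conjI ballI allI impI)
  fix s assume "s \<in> {f. dual_elem f \<and> order_preserving le f}"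
  then show "dual_elem s" by simp
next
  fix s assume "s \<in> {f. dual_elem f \<and> order_preserving le f}"
  then show "order_preserving le s" by simp
next
  fix a b assume "\<not> le a b"
  then obtain s where "s \<in> S" "s a = 1" "s b = 0" using assms(1) unfolding separating_def by blast
  moreover have "dual_elem s" "order_preserving le s" using assms \<open>s \<in> S\<close> unfolding separating_def by auto
  ultimately show "\<exists>s\<in>{f. dual_elem f \<and> order_preserving le f}. s a = 1 \<and> s b = 0" by blast
qed

lemma sep_to_plain:
  fixes le :: "'a::{ab_group_add, finite} \<Rightarrow> 'a \<Rightarrow> bool"
  assumes ap: "additive_poset le"
    and sep: "separating le S"
  shows "plain le"
proof -
  have "finite (UNIV :: ('a \<Rightarrow> bit) set)" by simp
  then have fS: "finite S" by (rule finite_subset[OF subset_UNIV])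
  obtain h where h: "bij_betw h {0..<card S} S" using ex_bij_betw_nat_finite[OF fS] by (elim exE)
  define \<phi> where "\<phi> a = {i \<in> {0..<card S}. h i a = 1}" for a
  have hS: "\<And>i. i \<in> {0..<card S} \<Longrightarrow> h i \<in> S" by (rule bij_betw_apply[OF h])
  have sS: "\<exists>i\<in>{0..<card S}. h i = s" if "s \<in> S" for s
  proof -
    have "s \<in> h ` {0..<card S}" using h that by (simp add: bij_betw_def)
    then show ?thesis by (auto simp del: atLeastLessThan_iff)
  qed
  have dual: "\<And>s. s \<in> S \<Longrightarrow> dual_elem s" and op: "\<And>s. s \<in> S \<Longrightarrow> order_preserving le s"
    using sep unfolding separating_def by auto
  have sp: "\<And>a b. \<not> le a b \<Longrightarrow> \<exists>s\<in>S. s a = 1 \<and> s b = 0"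
    using sep unfolding separating_def by auto
  have leiff: "le a b \<longleftrightarrow> \<phi> a \<subseteq> \<phi> b" for a b
  proof
    assume "le a b"
    then show "\<phi> a \<subseteq> \<phi> b" unfolding \<phi>_def using op hS
      unfolding order_preserving_def le_t_def by fastforce
  next
    assume sub: "\<phi> a \<subseteq> \<phi> b"
    show "le a b"
    proof (rule ccontr)
      assume "\<not> le a b"
      then obtain s where s: "s \<in> S" "s a = 1" "s b = 0" using sp by blast
      then obtain i where "i \<in> {0..<card S}" "h i = s" using sS by blast
      then have "i \<in> \<phi> a" "i \<notin> \<phi> b" using s unfolding \<phi>_def by auto
      then show False using sub by blast
    qed
  qed
  have add: "\<phi> (a + b) = (\<phi> a - \<phi> b) \<union> (\<phi> b - \<phi> a)" for a b
  proof -
    have "\<And>i. i \<in> {0..<card S} \<Longrightarrow> h i (a+b) = h i a + h i b"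
      using dual hS unfolding dual_elem_def by blast
    moreover have "\<And>x y::bit. (x + y = 1) \<longleftrightarrow> (x = 1 \<and> y = 0) \<or> (x = 0 \<and> y = 1)"
    proof -
      fix x y :: bit
      show "(x + y = 1) \<longleftrightarrow> (x = 1 \<and> y = 0) \<or> (x = 0 \<and> y = 1)"
        using bit_cases2[of x] bit_cases2[of y] by auto
    qed
    ultimately show ?thesis unfolding \<phi>_def by auto
  qed
  have inj: "inj \<phi>"
  proof (rule injI)
    fix a b assume "\<phi> a = \<phi> b"
    then have "le a b" "le b a" using leiff by auto
    then show "a = b" using ap unfolding additive_poset_def antisymp_def by blast
  qed
  have "finite {0..<card S}" by simp
  moreover have "embeds_in_powerset le {0..<card S} \<phi>"
    unfolding embeds_in_powerset_def
  proof (intro conjI)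
    show "\<forall>a. \<phi> a \<subseteq> {0..<card S}" unfolding \<phi>_def by blast
  next
    show "\<forall>a b. \<phi> (a + b) = (\<phi> a - \<phi> b) \<union> (\<phi> b - \<phi> a)" using add by (intro allI)
  next
    show "inj \<phi>" by (rule inj)
  next
    show "\<forall>a b. le a b \<longleftrightarrow> \<phi> a \<subseteq> \<phi> b" using leiff by (intro allI)
  qed
  ultimately show ?thesis unfolding plain_def by blast
qed

lemma plain_to_sep:
  fixes le :: "'a::ab_group_add \<Rightarrow> 'a \<Rightarrow> bool"
  assumes "plain le"
  shows "separating le {f. dual_elem f \<and> order_preserving le f}"
proof -
  obtain I :: "nat set" and \<phi> where e: "embeds_in_powerset le I \<phi>"
    using assms unfolding plain_def by blast
  define s where "s i a = (if i \<in> \<phi> a then (1::bit) else 0)" for i a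
  have d: "dual_elem (s i)" for i
    using e unfolding dual_elem_def embeds_in_powerset_def s_def by auto
  have o: "order_preserving le (s i)" for i
    using e unfolding order_preserving_def embeds_in_powerset_def s_def le_t_def by auto
  have "\<not> le a b \<Longrightarrow> \<exists>i. s i a = 1 \<and> s i b = 0" for a b
    using e unfolding embeds_in_powerset_def s_def by auto
  then show ?thesis unfolding separating_def using d o by blast
qed

theorem theorem8p1:
  fixes le :: "'a::{ab_group_add, finite} \<Rightarrow> 'a \<Rightarrow> bool"
  assumes "additive_poset le"
    and "\<forall>a::'a. a + a = 0"
  shows "(plain le \<longleftrightarrow> separating le {f. dual_elem f \<and> order_preserving le f})
       \<and> (separating le {f. dual_elem f \<and> order_preserving le f} \<longleftrightarrow>
            (\<exists>S. S \<subseteq> {f. dual_elem f} \<and> separating le S))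
       \<and> ((\<exists>S. S \<subseteq> {f. dual_elem f} \<and> separating le S) \<longleftrightarrow>
            (\<exists>S. S \<subseteq> {f. dual_elem f} \<and>
                 (\<forall>a. (\<forall>s\<in>S. s a = 0) \<longrightarrow> a = 0) \<and>
                 (\<forall>a b. le a b \<longleftrightarrow> (\<forall>s\<in>S. le_t (s a) (s b)))))"
proof (intro conjI iffI)
  show "plain le \<Longrightarrow> separating le {f. dual_elem f \<and> order_preserving le f}"
    by (rule plain_to_sep)
  show "separating le {f. dual_elem f \<and> order_preserving le f} \<Longrightarrow> plain le"
    by (rule sep_to_plain[OF assms(1)])
  show "separating le {f. dual_elem f \<and> order_preserving le f} \<Longrightarrow>
      \<exists>S. S \<subseteq> {f. dual_elem f} \<and> separating le S"
    by (intro exI[of _ "{f. dual_elem f \<and> order_preserving le f}"] conjI) auto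
  show "\<exists>S. S \<subseteq> {f. dual_elem f} \<and> separating le S \<Longrightarrow>
      separating le {f. dual_elem f \<and> order_preserving le f}" by (elim exE conjE) (rule sep_mono; assumption)
next
  assume "\<exists>S. S \<subseteq> {f. dual_elem f} \<and> separating le S"
  then obtain S where S: "S \<subseteq> {f. dual_elem f}" "separating le S" by blast
  have op: "\<And>s. s \<in> S \<Longrightarrow> order_preserving le s" and sp: "\<And>a b. \<not> le a b \<Longrightarrow> \<exists>s\<in>S. s a = 1 \<and> s b = 0"
    using S(2) unfolding separating_def by auto
  have z: "\<And>s. s \<in> S \<Longrightarrow> s 0 = 0" using S(1) dual_zero by blast
  have ker: "\<forall>a. (\<forall>s\<in>S. s a = 0) \<longrightarrow> a = 0"
  proof (intro allI impI)
    fix a assume k: "\<forall>s\<in>S. s a = 0"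
    have "le a 0"
    proof (rule ccontr)
      assume "\<not> le a 0"
      then obtain s where s1: "s \<in> S" "s a = 1" using sp by blast
      then have "s a = 0" using k by blast
      then show False using s1 by simp
    qed
    moreover have "le 0 a"
    proof (rule ccontr)
      assume "\<not> le 0 a"
      then obtain s where s1: "s \<in> S" "s 0 = 1" using sp by blast
      then have "s 0 = 0" using z by blast
      then show False using s1 by simp
    qed
    moreover have anti: "antisymp le" using assms(1) unfolding additive_poset_def by simp
    ultimately show "a = 0" by (simp add: antisympD)
  qed
  have "\<forall>a b. le a b \<longleftrightarrow> (\<forall>s\<in>S. le_t (s a) (s b))"
  proof (intro allI iffI ballI)
    fix a b s assume "le a b" "s \<in> S"
    then show "le_t (s a) (s b)" using op unfolding order_preserving_def by blast
  next
    fix a b assume h: "\<forall>s\<in>S. le_t (s a) (s b)"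
    show "le a b"
    proof (rule ccontr)
      assume "\<not> le a b"
      then obtain s where "s \<in> S" "s a = 1" "s b = 0" using sp by blast
      then have "le_t (s a) (s b)" "s a = 1" "s b = 0" using h by auto
      then show False by (simp add: le_t_def)
    qed
  qed
  then show "\<exists>S. S \<subseteq> {f. dual_elem f} \<and>
                 (\<forall>a. (\<forall>s\<in>S. s a = 0) \<longrightarrow> a = 0) \<and>
                 (\<forall>a b. le a b \<longleftrightarrow> (\<forall>s\<in>S. le_t (s a) (s b)))" using S(1) ker by (intro exI[of _ S] conjI)
next
  assume "\<exists>S. S \<subseteq> {f. dual_elem f} \<and>
                 (\<forall>a. (\<forall>s\<in>S. s a = 0) \<longrightarrow> a = 0) \<and>
                 (\<forall>a b. le a b \<longleftrightarrow> (\<forall>s\<in>S. le_t (s a) (s b)))"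
  then obtain S where S: "S \<subseteq> {f. dual_elem f}" "\<forall>a b. le a b \<longleftrightarrow> (\<forall>s\<in>S. le_t (s a) (s b))" by blast
  have "separating le S" unfolding separating_def order_preserving_def
  proof (intro conjI ballI allI impI)
    fix s assume "s \<in> S"
    then show "dual_elem s" using S(1) by blast
  next
    fix s a b assume "s \<in> S" "le a b"
    then show "le_t (s a) (s b)" using S(2) by blast
  next
    fix a b assume "\<not> le a b"
    then obtain s where "s \<in> S" "\<not> le_t (s a) (s b)" using S(2) by blast
    then show "\<exists>s\<in>S. s a = 1 \<and> s b = 0" using not_le_t[of "s a" "s b"] by auto
  qed
  then show "\<exists>S. S \<subseteq> {f. dual_elem f} \<and> separating le S" using S(1) by (intro exI[of _ S] conjI)
qed

end
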